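(* For every $M\in[\mathbb N]$, every $\epsilon>0$ and all ordinals $\zeta<\xi<\omega_1$, there exists $N\in[M]$ such that $\|\xi_n^L\|_\zeta<\epsilon$ for all $L\in[N]$ and all $n\in\mathbb N$.
   Context: $[M]$ is the set of infinite subsets of $M$, enumerated increasingly $M=(m_n)$. For each countable ordinal $\xi$ fix successor ordinals $(\beta_n(\xi)+1)_n$: equal to $\xi$ if $\xi$ is a successor, strictly increasing to $\xi$ if $\xi$ is a limit. Schreier families: $S_0=\{\{n\}:n\in\mathbb N\}\cup\{\emptyset\}$; $S_{\zeta+1}=\{\bigcup_{i=1}^nF_i:n\le\min F_1,\ F_1<\cdots<F_n,\ F_i\in S_\zeta\}\cup\{\emptyset\}$ ($F<G$ means $\max F<\min G$); for limit $\xi$, $S_\xi=\{F:F\in S_{\beta_n(\xi)+1}\text{ for some }n\le\min F\}$. For a signed measure $\mu$ on $\mathbb N$, $\|\mu\|_\zeta=\sup\{|\mu|(F):F\in S_\zeta\}$. Repeated averages: identify $\ell_1$ with signed measures on $\mathbb N$ with unit vector basis $(e_n)$. For $\xi<\omega_1$ and $M=(m_n)\in[\mathbb N]$ define finitely supported probability measures $\xi_n^M$ by transfinite induction: $0_n^M=e_{m_n}$. If $\xi=\zeta+1$: $\xi_1^M=\frac1{m_1}\sum_{i=1}^{m_1}\zeta_i^M$; given $\xi_n^M$, let $M_n=\{m\in M:m>\max\operatorname{supp}\xi_n^M\}$, $k_n=\min M_n$, $\xi_{n+1}^M=\frac1{k_n}\sum_{i=1}^{k_n}\zeta_i^{M_n}$.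 If $\xi$ is a limit: $\xi_1^M=[\beta_{m_1}(\xi)+1]_1^M$ and $\xi_{n+1}^M=[\beta_{k_n}(\xi)+1]_1^{M_n}$ with $M_n,k_n$ as before ($[\gamma]_1^P$ is the first measure of order $\gamma$ for the set $P$). *)

theory Defs
  imports "HOL-Analysis.Analysis" "HOL-Library.Infinite_Set"
begin

text \<open>Natural numbers are N = {1,2,...}; [A] is the set of infinite subsets of A.\<close>
definition posnat :: "nat set" where "posnat = {n. 1 \<le> n}"

definition inf_subsets :: "nat set \<Rightarrow> nat set set" where
  "inf_subsets A = {N. N \<subseteq> A \<and> infinite N}"

definition ozero :: "'o::wellorder" where "ozero = (LEAST x. True)"
definition osucc :: "'o::wellorder \<Rightarrow> 'o" where "osucc g = (LEAST x. g < x)"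
definition is_succ :: "'o::wellorder \<Rightarrow> bool" where
  "is_succ x = (\<exists>g. g < x \<and> x = osucc g)"
definition opred :: "'o::wellorder \<Rightarrow> 'o" where
  "opred x = (THE g. g < x \<and> x = osucc g)"
definition is_limit :: "'o::wellorder \<Rightarrow> bool" where
  "is_limit x = (x \<noteq> ozero \<and> \<not> is_succ x)"

definition fund_seq :: "('o::wellorder \<Rightarrow> nat \<Rightarrow> 'o) \<Rightarrow> bool" where
  "fund_seq beta =
    ((\<forall>x n. is_succ x \<and> 1 \<le> n \<longrightarrow> osucc (beta x n) = x) \<and>
     (\<forall>x. is_limit x \<longrightarrow>
        (\<forall>n\<ge>1. osucc (beta x n) < osucc (beta x (Suc n))) \<and>
        (\<forall>n\<ge>1. osucc (beta x n) < x) \<and>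
        (\<forall>g<x. \<exists>n\<ge>1. g < osucc (beta x n))))"

definition schreier_step ::
  "('o::wellorder \<Rightarrow> nat \<Rightarrow> 'o) \<Rightarrow> ('o \<Rightarrow> nat set set) \<Rightarrow> 'o \<Rightarrow> nat set set" where
  "schreier_step beta f x =
    (if x = ozero then {{n} | n. n \<in> posnat} \<union> {{}}
     else if is_succ x then
       {\<Union> (set Fs) | Fs. Fs \<noteq> [] \<and> length Fs \<le> Min (hd Fs)
            \<and> sorted_wrt (\<lambda>F G. Max F < Min G) Fs
            \<and> (\<forall>F\<in>set Fs. F \<in> f (opred x) \<and> F \<noteq> {})} \<union> {{}}
     else {F. F \<noteq> {} \<and> (\<exists>n. 1 \<le> n \<and> n \<le> Min F \<and> F \<in> f (osucc (beta x n)))} \<union> {{}})"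

definition schreier :: "('o::wellorder \<Rightarrow> nat \<Rightarrow> 'o) \<Rightarrow> 'o \<Rightarrow> nat set set" where
  "schreier beta = wfrec {(x, y). x < y} (schreier_step beta)"

text \<open>Signed measures on N are represented by their densities nat => real;
  |mu|(F) = sum over F of |mu i|.\<close>
definition schreier_norm ::
  "('o::wellorder \<Rightarrow> nat \<Rightarrow> 'o) \<Rightarrow> 'o \<Rightarrow> (nat \<Rightarrow> real) \<Rightarrow> real" where
  "schreier_norm beta z mu = (SUP F \<in> schreier beta z. \<Sum>i\<in>F. \<bar>mu i\<bar>)"

definition unitvec :: "nat \<Rightarrow> nat \<Rightarrow> real" where
  "unitvec m = (\<lambda>i. if i = m then 1 else 0)"

definition msupp :: "(nat \<Rightarrow> real) \<Rightarrow> nat set" where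
  "msupp mu = {i. mu i \<noteq> 0}"

definition minset :: "nat set \<Rightarrow> nat" where
  "minset P = (LEAST m. m \<in> P)"

text \<open>Given g (P |-> first measure built from P), the sets M_n:
  M_0 = M, M_n = {m in M. m > max supp xi_n^M}, where xi_n^M = g (M_{n-1}).\<close>
primrec msets :: "(nat set \<Rightarrow> nat \<Rightarrow> real) \<Rightarrow> nat set \<Rightarrow> nat \<Rightarrow> nat set" where
  "msets g M 0 = M"
| "msets g M (Suc n) = {m \<in> M. Max (msupp (g (msets g M n))) < m}"

text \<open>Repeated averages: ravg beta xi M n is xi_n^M (n >= 1), by transfinite recursion.\<close>
definition ravg_step ::
  "('o::wellorder \<Rightarrow> nat \<Rightarrow> 'o) \<Rightarrow> ('o \<Rightarrow> nat set \<Rightarrow> nat \<Rightarrow> nat \<Rightarrow> real)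
     \<Rightarrow> 'o \<Rightarrow> nat set \<Rightarrow> nat \<Rightarrow> nat \<Rightarrow> real" where
  "ravg_step beta f x M n =
    (if x = ozero then unitvec (enumerate M (n - 1))
     else if is_succ x then
       (let g = (\<lambda>P. (\<lambda>j. (1 / real (minset P)) *
                   (\<Sum>i = 1..minset P. f (opred x) P i j)))
        in g (msets g M (n - 1)))
     else
       (let g = (\<lambda>P. f (osucc (beta x (minset P))) P 1)
        in g (msets g M (n - 1))))"

definition ravg :: "('o::wellorder \<Rightarrow> nat \<Rightarrow> 'o) \<Rightarrow> 'o \<Rightarrow> nat set \<Rightarrow> nat \<Rightarrow> nat \<Rightarrow> real" where
  "ravg beta = wfrec {(x, y). x < y} (ravg_step beta)"

end

theory Submission
  imports Defs
begin


lemma wfo: "wf {(x::'o::wellorder, y). x < y}" by (rule wellorder_class.wf)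

lemma ozero_le: "ozero \<le> (x::'o::wellorder)"
  unfolding ozero_def by (rule Least_le) simp

lemma osucc_le: "(g::'o::wellorder) < y \<Longrightarrow> osucc g \<le> y"
  unfolding osucc_def by (rule Least_le)

lemma osucc_gt: "(g::'o::wellorder) < y \<Longrightarrow> g < osucc g"
  unfolding osucc_def by (rule LeastI)

lemma lt_osucc_le: "(z::'o::wellorder) < osucc h \<Longrightarrow> z \<le> h"
  using osucc_le[of h z] by (metis leD leI)

lemma opred: assumes "is_succ (x::'o::wellorder)" shows "opred x < x" "osucc (opred x) = x"
proof -
  obtain g where g: "g < x" "x = osucc g" using assms unfolding is_succ_def by blast
  have u: "g' = g" if "g' < x" "x = osucc g'" for g'
  proof (rule ccontr)
    assume "g' \<noteq> g"
    then consider "g' < g" | "g < g'" by fastforce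
    then show False
    proof cases
      case 1 then have "osucc g' \<le> g" by (rule osucc_le) 
      then show False using g that by simp
    next
      case 2 then have "osucc g \<le> g'" by (rule osucc_le) 
      then show False using g that by simp
    qed
  qed
  have "opred x = g" unfolding opred_def
    by (rule the_equality) (use g u in auto)
  then show "opred x < x" "osucc (opred x) = x" using g by auto
qed

lemma succ_is_succ: "(h::'o::wellorder) < osucc h \<Longrightarrow> is_succ (osucc h) \<and> opred (osucc h) = h"
proof -
  assume a: "h < osucc h"
  then have s: "is_succ (osucc h)" unfolding is_succ_def by blast
  obtain g where g: "g < osucc h" "osucc h = osucc g" using s unfolding is_succ_def by blast
  have "opred (osucc h) < osucc h" "osucc (opred (osucc h)) = osucc h" using opred[OF s] by auto
  moreover have "opred (osucc h) = h"
  proof (rule ccontr)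
    assume ne: "opred (osucc h) \<noteq> h"
    then consider "opred (osucc h) < h" | "h < opred (osucc h)" by fastforce
    then show False
    proof cases
      case 1 then have "osucc (opred (osucc h)) \<le> h" by (rule osucc_le)
      then show False using opred[OF s] a by simp
    next
      case 2 then show False using opred[OF s] by (metis leD lt_osucc_le)
    qed
  qed
  ultimately show ?thesis using s by blast
qed

lemma inf_sub_trans: "N \<in> inf_subsets M \<Longrightarrow> T \<in> inf_subsets N \<Longrightarrow> T \<in> inf_subsets M"
  unfolding inf_subsets_def by auto

lemma inf_restrict: "M \<in> inf_subsets P \<Longrightarrow> {m\<in>M. Q m} \<in> inf_subsets M \<Longrightarrow> {m\<in>M. Q m} \<in> inf_subsets P"
  unfolding inf_subsets_def by auto

lemma infinite_tail: "infinite (L::nat set) \<Longrightarrow> infinite {m\<in>L. b < m}"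
proof
  assume "infinite L" "finite {m\<in>L. b < m}"
  then have "finite ({m\<in>L. b < m} \<union> {..b})" by auto
  moreover have "L \<subseteq> {m\<in>L. b < m} \<union> {..b}" by auto
  ultimately show False using \<open>infinite L\<close> finite_subset by blast
qed

lemma infinite_tail_le: "infinite (L::nat set) \<Longrightarrow> infinite {m\<in>L. b \<le> m}"
proof -
  assume "infinite L"
  then have "infinite {m\<in>L. b < m}" by (rule infinite_tail)
  then show ?thesis by (rule infinite_super[rotated]) auto
qed

lemma tail_in: "L \<in> inf_subsets P \<Longrightarrow> {m\<in>L. b < m} \<in> inf_subsets L"
  unfolding inf_subsets_def using infinite_tail by auto

lemma tail_le_in: "L \<in> inf_subsets P \<Longrightarrow> {m\<in>L. b \<le> m} \<in> inf_subsets L"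
  unfolding inf_subsets_def using infinite_tail_le by auto

lemma minset_in: "L \<in> inf_subsets posnat \<Longrightarrow> minset L \<in> L \<and> 1 \<le> minset L \<and> (\<forall>l\<in>L. minset L \<le> l)"
proof -
  assume a: "L \<in> inf_subsets posnat"
  then obtain l where "l \<in> L" unfolding inf_subsets_def using infinite_imp_nonempty by blast
  then have "minset L \<in> L" unfolding minset_def by (rule LeastI)
  moreover have "\<forall>l\<in>L. minset L \<le> l" unfolding minset_def by (auto intro: Least_le)
  ultimately show ?thesis using a unfolding inf_subsets_def posnat_def by auto
qed

lemma msets_sub: "infinite L \<Longrightarrow> msets g L k \<subseteq> L \<and> infinite (msets g L k)"
  by (induction k) (auto simp: infinite_tail)

lemma msets_in: "L \<in> inf_subsets P \<Longrightarrow> msets g L k \<in> inf_subsets L"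
  using msets_sub unfolding inf_subsets_def by blast

lemma msets_cong: assumes "infinite L" "\<And>P. P \<subseteq> L \<Longrightarrow> infinite P \<Longrightarrow> g P = g' P"
  shows "msets g L k = msets g' L k"
proof (induction k)
  case (Suc k)
  have "g (msets g L k) = g' (msets g' L k)" using Suc assms msets_sub[of L g k] by simp
  then show ?case by simp
qed simp



lemma ravg_unf: "ravg beta x = ravg_step beta (cut (ravg beta) {(x, y). x < y} x) x"
  unfolding ravg_def by (rule wfrec[OF wfo])

lemma schreier_unf: "schreier beta x = schreier_step beta (cut (schreier beta) {(x, y). x < y} x) x"
  unfolding schreier_def by (rule wfrec[OF wfo])

lemma ravg_zero: "ravg beta ozero L n = unitvec (enumerate L (n - 1))"
  by (subst ravg_unf) (simp add: ravg_step_def)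

definition gsucc where "gsucc beta x = (\<lambda>P. (\<lambda>j. (1 / real (minset P)) *
                   (\<Sum>i = 1..minset P. ravg beta (opred x) P i j)))"

lemma ravg_succ: "is_succ x \<Longrightarrow> ravg beta x L n = gsucc beta x (msets (gsucc beta x) L (n - 1))"
proof -
  assume s: "is_succ x"
  have nz: "x \<noteq> ozero" using s ozero_le unfolding is_succ_def by (metis leD)
  have "ravg beta x L n = ravg_step beta (cut (ravg beta) {(x, y). x < y} x) x L n"
    by (subst ravg_unf) simp
  also have "\<dots> = gsucc beta x (msets (gsucc beta x) L (n - 1))"
    using s nz opred[OF s] unfolding ravg_step_def gsucc_def
    by (simp add: cut_apply Let_def)
  finally show ?thesis .
qed

definition glim where "glim beta x = (\<lambda>P. ravg beta (osucc (beta x (minset P))) P 1)"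

lemma fund_lt: "fund_seq beta \<Longrightarrow> is_limit x \<Longrightarrow> 1 \<le> n \<Longrightarrow> osucc (beta x n) < x"
  unfolding fund_seq_def by blast

lemma ravg_lim: assumes f: "fund_seq beta" and l: "is_limit x" and L: "L \<in> inf_subsets posnat"
  shows "ravg beta x L n = glim beta x (msets (glim beta x) L (n - 1))"
proof -
  let ?g = "\<lambda>P. cut (ravg beta) {(x, y). x < y} x (osucc (beta x (minset P))) P 1"
  have nz: "x \<noteq> ozero" "\<not> is_succ x" using l unfolding is_limit_def by auto
  have eq: "?g P = glim beta x P" if "P \<subseteq> L" "infinite P" for P
  proof -
    have "P \<in> inf_subsets posnat" using that L unfolding inf_subsets_def by auto
    then have "1 \<le> minset P" using minset_in by blast
    then show ?thesis unfolding glim_def using fund_lt[OF f l] by (simp add: cut_apply)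
  qed
  have "ravg beta x L n = ravg_step beta (cut (ravg beta) {(x, y). x < y} x) x L n"
    by (subst ravg_unf) simp
  also have "\<dots> = ?g (msets ?g L (n - 1))"
    using nz unfolding ravg_step_def by (simp add: Let_def)
  also have "msets ?g L (n - 1) = msets (glim beta x) L (n - 1)"
    by (rule msets_cong) (use L eq in \<open>auto simp: inf_subsets_def\<close>)
  also have "?g (msets (glim beta x) L (n - 1)) = glim beta x (msets (glim beta x) L (n - 1))"
    by (rule eq) (use msets_sub L in \<open>auto simp: inf_subsets_def\<close>)
  finally show ?thesis .
qed

lemma A_succ: "is_succ x \<Longrightarrow> ravg beta x L 1 = (\<lambda>j. (1 / real (minset L)) *
                   (\<Sum>i = 1..minset L. ravg beta (opred x) L i j))"
  by (simp add: ravg_succ gsucc_def)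

lemma A_lim: "fund_seq beta \<Longrightarrow> is_limit x \<Longrightarrow> L \<in> inf_subsets posnat \<Longrightarrow>
   ravg beta x L 1 = ravg beta (osucc (beta x (minset L))) L 1"
  by (simp add: ravg_lim glim_def)

lemma cases3: obtains "x = ozero" | "is_succ x" | "is_limit x"
  unfolding is_limit_def by blast

lemma seq: assumes f: "fund_seq beta" and L: "L \<in> inf_subsets posnat" and i: "1 \<le> i"
  shows "\<exists>T\<in>inf_subsets L. ravg beta x L i = ravg beta x T 1 \<and>
     (2 \<le> i \<longrightarrow> (\<forall>t\<in>T. Max (msupp (ravg beta x L (i - 1))) < t))"
proof (cases x rule: cases3)
  case 1
  let ?T = "{m\<in>L. enumerate L (i - 1) \<le> m}"
  have inf: "infinite L" using L unfolding inf_subsets_def by auto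
  have T: "?T \<in> inf_subsets L" using tail_le_in L by blast
  have "enumerate ?T 0 = enumerate L (i - 1)"
    unfolding enumerate.simps by (rule Least_equality) (use enumerate_in_set[OF inf] in auto)
  then have e: "ravg beta x L i = ravg beta x ?T 1" using 1 by (simp add: ravg_zero)
  have "Max (msupp (ravg beta x L (i - 1))) < t" if "2 \<le> i" "t \<in> ?T" for t
  proof -
    have "msupp (ravg beta x L (i - 1)) = {enumerate L (i - 1 - 1)}"
      using 1 by (auto simp: ravg_zero msupp_def unitvec_def)
    moreover have "enumerate L (i - 1 - 1) < enumerate L (i - 1)"
      using that enumerate_mono[OF _ inf] by simp
    ultimately show ?thesis using that by auto
  qed
  then show ?thesis using T e by blast
next
  case 2
  let ?g = "gsucc beta x"
  let ?T = "msets ?g L (i - 1)"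
  have T: "?T \<in> inf_subsets L" using msets_in L by blast
  have e: "ravg beta x L i = ravg beta x ?T 1" using 2 by (simp add: ravg_succ)
  have "Max (msupp (ravg beta x L (i - 1))) < t" if "2 \<le> i" "t \<in> ?T" for t
  proof -
    have "i - 1 = Suc (i - 1 - 1)" using that by simp
    then have "?T = {m\<in>L. Max (msupp (?g (msets ?g L (i - 1 - 1)))) < m}"
      by (metis msets.simps(2))
    then show ?thesis using that 2 by (simp add: ravg_succ)
  qed
  then show ?thesis using T e by blast
next
  case 3
  let ?g = "glim beta x"
  let ?T = "msets ?g L (i - 1)"
  have T: "?T \<in> inf_subsets L" using msets_in L by blast
  have TP: "?T \<in> inf_subsets posnat" using T L inf_sub_trans by blast
  have e: "ravg beta x L i = ravg beta x ?T 1" using 3 ravg_lim[OF f 3 L] ravg_lim[OF f 3 TP] by simp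
  have "Max (msupp (ravg beta x L (i - 1))) < t" if "2 \<le> i" "t \<in> ?T" for t
  proof -
    have "i - 1 = Suc (i - 1 - 1)" using that by simp
    then have "?T = {m\<in>L. Max (msupp (?g (msets ?g L (i - 1 - 1)))) < m}"
      by (metis msets.simps(2))
    then show ?thesis using that 3 ravg_lim[OF f 3 L] by simp
  qed
  then show ?thesis using T e by blast
qed



lemma schreier_eq: assumes f: "fund_seq beta" shows "schreier beta x = schreier_step beta (schreier beta) x"
proof -
  have "schreier beta x = schreier_step beta (cut (schreier beta) {(x, y). x < y} x) x"
    by (rule schreier_unf)
  also have "\<dots> = schreier_step beta (schreier beta) x"
  proof (cases x rule: cases3)
    case 1 then show ?thesis by (simp add: schreier_step_def)
  next
    case 2 then show ?thesis using opred[OF 2] by (simp add: schreier_step_def cut_apply)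
  next
    case 3
    have nz: "x \<noteq> ozero" "\<not> is_succ x" using 3 unfolding is_limit_def by auto
    have "(\<exists>n. 1 \<le> n \<and> n \<le> Min F \<and> F \<in> cut (schreier beta) {(x, y). x < y} x (osucc (beta x n))) =
          (\<exists>n. 1 \<le> n \<and> n \<le> Min F \<and> F \<in> schreier beta (osucc (beta x n)))" for F
      using fund_lt[OF f 3] by (auto simp: cut_apply)
    then show ?thesis using nz by (simp add: schreier_step_def)
  qed
  finally show ?thesis .
qed

lemma schreier_empty: "fund_seq beta \<Longrightarrow> {} \<in> schreier beta x"
  by (subst schreier_eq) (auto simp: schreier_step_def)

lemma schreier_finite: assumes f: "fund_seq beta" shows "F \<in> schreier beta x \<Longrightarrow> finite F"
proof (induction x arbitrary: F rule: less_induct)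
  case (less x)
  show ?case
  proof (cases x rule: cases3)
    case 1 then show ?thesis using less.prems by (subst (asm) schreier_eq[OF f]) (auto simp: schreier_step_def)
  next
    case 2
    have nz: "x \<noteq> ozero" using 2 ozero_le unfolding is_succ_def by (metis leD)
    show ?thesis using less.prems less.IH[OF opred(1)[OF 2]] nz 2
      by (subst (asm) schreier_eq[OF f]) (auto simp: schreier_step_def)
  next
    case 3
    have nz: "x \<noteq> ozero" "\<not> is_succ x" using 3 unfolding is_limit_def by auto
    show ?thesis using less.prems less.IH[OF fund_lt[OF f 3]] nz
      by (subst (asm) schreier_eq[OF f]) (auto simp: schreier_step_def)
  qed
qed

definition prob :: "('o::wellorder \<Rightarrow> nat \<Rightarrow> 'o) \<Rightarrow> 'o \<Rightarrow> bool" where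
  "prob beta x = (\<forall>T\<in>inf_subsets posnat. (\<forall>j. 0 \<le> ravg beta x T 1 j) \<and>
     (\<forall>F. (\<Sum>j\<in>F. ravg beta x T 1 j) \<le> 1) \<and> finite (msupp (ravg beta x T 1)) \<and>
     msupp (ravg beta x T 1) \<noteq> {} \<and> msupp (ravg beta x T 1) \<subseteq> T)"

lemma prob_seq: assumes f: "fund_seq beta" and p: "prob beta x" and L: "L \<in> inf_subsets posnat" and i: "1 \<le> i"
  shows "(\<forall>j. 0 \<le> ravg beta x L i j) \<and>
     (\<forall>F. (\<Sum>j\<in>F. ravg beta x L i j) \<le> 1) \<and> finite (msupp (ravg beta x L i)) \<and>
     msupp (ravg beta x L i) \<noteq> {} \<and> msupp (ravg beta x L i) \<subseteq> L"
proof -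
  obtain T where T: "T \<in> inf_subsets L" "ravg beta x L i = ravg beta x T 1" using seq[OF f L i] by blast
  have "T \<in> inf_subsets posnat" using T L inf_sub_trans by blast
  then have Q: "(\<forall>j. 0 \<le> ravg beta x T 1 j) \<and>
     (\<forall>F. (\<Sum>j\<in>F. ravg beta x T 1 j) \<le> 1) \<and> finite (msupp (ravg beta x T 1)) \<and>
     msupp (ravg beta x T 1) \<noteq> {} \<and> msupp (ravg beta x T 1) \<subseteq> T"
    using p unfolding prob_def by blast
  have "T \<subseteq> L" using T unfolding inf_subsets_def by auto
  then show ?thesis using Q T(2) by auto
qed

lemma sum_unitvec0: "(\<Sum>j\<in>F. unitvec m j) \<le> 1"
proof (cases "finite F")
  case True then show ?thesis by (simp add: unitvec_def)
qed simp

lemma sum_unitvec: "\<forall>F. (\<Sum>j\<in>F. unitvec m j) \<le> 1" using sum_unitvec0 by blast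

lemma prob_all: assumes f: "fund_seq beta" shows "prob beta x"
proof (induction x rule: less_induct)
  case (less x)
  show ?case unfolding prob_def
  proof
    fix T assume T: "T \<in> inf_subsets posnat"
    have m: "minset T \<in> T" "1 \<le> minset T" using minset_in[OF T] by auto
    show "(\<forall>j. 0 \<le> ravg beta x T 1 j) \<and>
     (\<forall>F. (\<Sum>j\<in>F. ravg beta x T 1 j) \<le> 1) \<and> finite (msupp (ravg beta x T 1)) \<and>
     msupp (ravg beta x T 1) \<noteq> {} \<and> msupp (ravg beta x T 1) \<subseteq> T"
    proof (cases x rule: cases3)
      case 1
      have e: "enumerate T 0 = minset T" by (simp only: minset_def enumerate.simps)
      have "msupp (unitvec (minset T)) = {minset T}" by (auto simp: msupp_def unitvec_def)
      then show ?thesis using 1 m sum_unitvec[of "minset T"] by (simp add: ravg_zero e, simp add: unitvec_def)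
    next
      case 2
      let ?k = "minset T"
      let ?mu = "\<lambda>i. ravg beta (opred x) T i"
      have p: "prob beta (opred x)" using less.IH opred[OF 2] by blast
      have P: "\<And>i. i \<in> {1..?k} \<Longrightarrow> (\<forall>j. 0 \<le> ?mu i j) \<and>
         (\<forall>F. (\<Sum>j\<in>F. ?mu i j) \<le> 1) \<and> finite (msupp (?mu i)) \<and>
         msupp (?mu i) \<noteq> {} \<and> msupp (?mu i) \<subseteq> T"
        using prob_seq[OF f p T] by auto
      have A: "ravg beta x T 1 = (\<lambda>j. (1 / real ?k) * (\<Sum>i = 1..?k. ?mu i j))" by (rule A_succ[OF 2])
      have nn: "0 \<le> ravg beta x T 1 j" for j
      proof -
        have "0 \<le> (\<Sum>i = 1..?k. ?mu i j)" by (rule sum_nonneg) (use P in blast)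
        then show ?thesis unfolding A by simp
      qed
      have le1: "(\<Sum>j\<in>F. ravg beta x T 1 j) \<le> 1" for F
      proof -
        have "(\<Sum>j\<in>F. ravg beta x T 1 j) = (1 / real ?k) * (\<Sum>i = 1..?k. \<Sum>j\<in>F. ?mu i j)"
          unfolding A by (simp add: sum_distrib_left sum.swap[of _ F])
        also have "\<dots> \<le> (1 / real ?k) * (\<Sum>i = 1..?k. 1)"
          by (rule mult_left_mono, rule sum_mono) (use P in auto)
        also have "\<dots> = 1" using m by simp
        finally show ?thesis .
      qed
      have sub: "msupp (ravg beta x T 1) \<subseteq> (\<Union>i\<in>{1..?k}. msupp (?mu i))"
      proof
        fix j assume "j \<in> msupp (ravg beta x T 1)"
        then have "(\<Sum>i = 1..?k. ?mu i j) \<noteq> 0" unfolding A msupp_def by auto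
        then obtain i where "i \<in> {1..?k}" "?mu i j \<noteq> 0" by (meson sum.neutral)
        then show "j \<in> (\<Union>i\<in>{1..?k}. msupp (?mu i))" unfolding msupp_def by auto
      qed
      have fin: "finite (msupp (ravg beta x T 1))" by (rule finite_subset[OF sub]) (use P in auto)
      have subT: "msupp (ravg beta x T 1) \<subseteq> T" using sub P by blast
      obtain j where j: "j \<in> msupp (?mu 1)" using P[of 1] m by auto
      have "?mu 1 j \<le> (\<Sum>i = 1..?k. ?mu i j)"
        by (rule member_le_sum) (use P m in auto)
      moreover have "0 < ?mu 1 j" using j P[of 1] m unfolding msupp_def by (simp add: order_less_le)
      ultimately have "0 < ravg beta x T 1 j" unfolding A using m by simp
      then have "j \<in> msupp (ravg beta x T 1)" unfolding msupp_def by simp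
      then have "msupp (ravg beta x T 1) \<noteq> {}" by blast
      then show ?thesis using nn le1 fin subT by blast
    next
      case 3
      have lt: "osucc (beta x (minset T)) < x" using fund_lt[OF f 3 m(2)] .
      show ?thesis using less.IH[OF lt] T A_lim[OF f 3 T] unfolding prob_def by simp
    qed
  qed
qed



lemma seqsum_aux:
  fixes a :: "nat \<Rightarrow> real"
  assumes b: "\<forall>i\<in>{1..K}. 0 \<le> a i \<and> a i \<le> 1"
    and c: "\<forall>i j. 1 \<le> j \<longrightarrow> j < i \<longrightarrow> i \<le> K \<longrightarrow> a j \<noteq> 0 \<longrightarrow> a i \<le> d" and d: "0 \<le> d"
  shows "k \<le> K \<Longrightarrow> (\<Sum>i=1..k. a i) \<le> (if (\<forall>i\<in>{1..k}. a i = 0) then 0 else 1 + real k * d)"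
proof (induction k)
  case 0 then show ?case by simp
next
  case (Suc k)
  have IH: "(\<Sum>i=1..k. a i) \<le> (if (\<forall>i\<in>{1..k}. a i = 0) then 0 else 1 + real k * d)"
    using Suc by simp
  have s: "(\<Sum>i=1..Suc k. a i) = (\<Sum>i=1..k. a i) + a (Suc k)" by simp
  have ak: "0 \<le> a (Suc k)" "a (Suc k) \<le> 1" using b Suc.prems by auto
  show ?case
  proof (cases "\<forall>i\<in>{1..k}. a i = 0")
    case True
    then have "(\<Sum>i=1..k. a i) = 0" by simp
    then have "(\<Sum>i=1..Suc k. a i) = a (Suc k)" using s by simp
    moreover have "a (Suc k) \<le> 1 + real (Suc k) * d" using ak d by (smt (verit) mult_nonneg_nonneg of_nat_0_le_iff)
    moreover have "(\<forall>i\<in>{1..Suc k}. a i = 0) = (a (Suc k) = 0)" using True by (auto simp: le_Suc_eq)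
    ultimately show ?thesis by auto
  next
    case False
    then obtain j where j: "j \<in> {1..k}" "a j \<noteq> 0" by blast
    then have "a (Suc k) \<le> d" using c Suc.prems by auto
    then have "(\<Sum>i=1..Suc k. a i) \<le> 1 + real (Suc k) * d" using s IH False by (simp add: algebra_simps split: if_splits)
    then show ?thesis using j by auto
  qed
qed

lemma seqsum:
  fixes a :: "nat \<Rightarrow> real"
  assumes "\<forall>i\<in>{1..K}. 0 \<le> a i \<and> a i \<le> 1"
    and "\<forall>i j. 1 \<le> j \<longrightarrow> j < i \<longrightarrow> i \<le> K \<longrightarrow> a j \<noteq> 0 \<longrightarrow> a i \<le> d" and "0 \<le> d"
  shows "(\<Sum>i=1..K. a i) \<le> 1 + real K * d"
  using seqsum_aux[OF assms, of K] assms(3) by (auto split: if_splits intro: order_trans)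

lemma avg_bound:
  assumes f: "fund_seq beta" and p: "prob beta eta" and L: "L \<in> inf_subsets posnat"
    and d: "0 \<le> d"
    and cond: "\<forall>i. 2 \<le> i \<longrightarrow> i \<le> minset L \<longrightarrow> (\<forall>F\<in>schreier beta z.
        (\<exists>f\<in>F. f \<le> Max (msupp (ravg beta eta L (i - 1)))) \<longrightarrow> (\<Sum>j\<in>F. ravg beta eta L i j) \<le> d)"
    and F: "F \<in> schreier beta z"
  shows "(\<Sum>j\<in>F. (1 / real (minset L)) * (\<Sum>i = 1..minset L. ravg beta eta L i j)) \<le> 1 / real (minset L) + d"
proof -
  let ?k = "minset L"
  let ?mu = "\<lambda>i. ravg beta eta L i"
  let ?c = "\<lambda>i. Max (msupp (?mu i))"
  define a where "a i = (\<Sum>j\<in>F. ?mu i j)" for i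
  have k1: "1 \<le> ?k" using minset_in[OF L] by auto
  have finF: "finite F" using schreier_finite[OF f F] .
  have P: "\<And>i. 1 \<le> i \<Longrightarrow> (\<forall>j. 0 \<le> ?mu i j) \<and>
         (\<forall>F. (\<Sum>j\<in>F. ?mu i j) \<le> 1) \<and> finite (msupp (?mu i)) \<and>
         msupp (?mu i) \<noteq> {} \<and> msupp (?mu i) \<subseteq> L"
    using prob_seq[OF f p L] by blast
  have step: "?c m < ?c (Suc m)" if "1 \<le> m" for m
  proof -
    have ex: "\<exists>T\<in>inf_subsets L. ?mu (Suc m) = ravg beta eta T 1 \<and> (\<forall>t\<in>T. ?c (Suc m - 1) < t)"
      using seq[OF f L, of "Suc m" eta] that by auto
    then obtain T where T: "T \<in> inf_subsets L" "?mu (Suc m) = ravg beta eta T 1"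
      "\<forall>t\<in>T. ?c (Suc m - 1) < t" by blast
    have PT: "msupp (?mu (Suc m)) \<subseteq> T"
    proof -
      have "T \<in> inf_subsets posnat" using T L inf_sub_trans by blast
      then show ?thesis using p T(2) unfolding prob_def by auto
    qed
    have "?c (Suc m) \<in> msupp (?mu (Suc m))" using P[of "Suc m"] by (simp add: Max_in)
    then show ?thesis using PT T(3) by auto
  qed
  have mono: "?c j \<le> ?c m" if "1 \<le> j" "j \<le> m" for j m
  proof -
    have "(\<lambda>n. ?c (n + 1)) (j - 1) \<le> (\<lambda>n. ?c (n + 1)) (m - 1)"
    proof (rule lift_Suc_mono_le[of "\<lambda>n. ?c (n + 1)"])
      show "?c (n + 1) \<le> ?c (Suc n + 1)" for n using step[of "Suc n"] by simp
      show "j - 1 \<le> m - 1" using that by simp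
    qed
    then show ?thesis using that by simp
  qed
  have a01: "\<forall>i\<in>{1..?k}. 0 \<le> a i \<and> a i \<le> 1" unfolding a_def using P by (auto intro: sum_nonneg)
  have ac: "\<forall>i j. 1 \<le> j \<longrightarrow> j < i \<longrightarrow> i \<le> ?k \<longrightarrow> a j \<noteq> 0 \<longrightarrow> a i \<le> d"
  proof (intro allI impI)
    fix i j assume ij: "1 \<le> j" "j < i" "i \<le> ?k" "a j \<noteq> 0"
    then obtain f where ff: "f \<in> F" "?mu j f \<noteq> 0" unfolding a_def by (meson sum.neutral)
    then have "f \<in> msupp (?mu j)" unfolding msupp_def by simp
    then have "f \<le> ?c j" using P[of j] ij by (simp add: Max_ge)
    also have "\<dots> \<le> ?c (i - 1)" using mono ij by simp
    finally have "\<exists>f\<in>F. f \<le> ?c (i - 1)" using ff by blast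
    then show "a i \<le> d" unfolding a_def using cond ij F by auto
  qed
  have "(\<Sum>j\<in>F. (1 / real ?k) * (\<Sum>i = 1..?k. ?mu i j)) = (1 / real ?k) * (\<Sum>i = 1..?k. a i)"
    unfolding a_def by (simp add: sum_distrib_left sum.swap[of _ F])
  also have "\<dots> \<le> (1 / real ?k) * (1 + real ?k * d)"
    by (rule mult_left_mono[OF seqsum[OF a01 ac d]]) simp
  also have "\<dots> = 1 / real ?k + d" using k1 by (simp add: field_simps)
  finally show ?thesis .
qed

lemma diag:
  assumes H: "\<And>c M. M \<in> inf_subsets posnat \<Longrightarrow> \<exists>N\<in>inf_subsets M. \<forall>T\<in>inf_subsets N. R c T"
    and M: "M \<in> inf_subsets posnat"
  shows "\<exists>N\<in>inf_subsets M. \<forall>T\<in>inf_subsets N. \<forall>c\<in>N. (\<forall>t\<in>T. c < t) \<longrightarrow> R c T"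
proof -
  define st where "st X = (SOME N'. N' \<in> inf_subsets {x\<in>X. (LEAST x. x\<in>X) < x} \<and>
      (\<forall>T\<in>inf_subsets N'. R (LEAST x. x\<in>X) T))" for X
  define X where "X j = (st ^^ j) M" for j
  define a where "a j = (LEAST x. x \<in> X j)" for j
  have X0: "X 0 = M" and XS: "X (Suc j) = st (X j)" for j unfolding X_def by auto
  have stp: "st Y \<in> inf_subsets {x\<in>Y. (LEAST x. x\<in>Y) < x} \<and> (\<forall>T\<in>inf_subsets (st Y). R (LEAST x. x\<in>Y) T)"
    if "Y \<in> inf_subsets posnat" for Y
  proof -
    have "{x\<in>Y. (LEAST x. x\<in>Y) < x} \<in> inf_subsets posnat"
      using tail_in[OF that] that inf_sub_trans by blast
    then have "\<exists>N'. N' \<in> inf_subsets {x\<in>Y. (LEAST x. x\<in>Y) < x} \<and> (\<forall>T\<in>inf_subsets N'. R (LEAST x. x\<in>Y) T)"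
      using H by blast
    then show ?thesis unfolding st_def by (rule someI_ex)
  qed
  have Xin: "X j \<in> inf_subsets posnat" for j
  proof (induction j)
    case 0 then show ?case using M X0 by simp
  next
    case (Suc j)
    have "X (Suc j) \<in> inf_subsets {x\<in>X j. a j < x}" using stp[OF Suc] XS a_def by simp
    moreover have "{x\<in>X j. a j < x} \<in> inf_subsets posnat" using tail_in[OF Suc] Suc inf_sub_trans by blast
    ultimately show ?case using inf_sub_trans by blast
  qed
  have XSsub: "X (Suc j) \<subseteq> {x\<in>X j. a j < x}" for j using stp[OF Xin[of j]] XS a_def
    unfolding inf_subsets_def by simp
  have XR: "\<forall>T\<in>inf_subsets (X (Suc j)). R (a j) T" for j using stp[OF Xin[of j]] XS a_def by simp
  have ain: "a j \<in> X j" for j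
  proof -
    obtain y where "y \<in> X j" using Xin[of j] unfolding inf_subsets_def using infinite_imp_nonempty by blast
    then show ?thesis unfolding a_def by (rule LeastI)
  qed
  have Xdec: "X i \<subseteq> X j" if "j \<le> i" for i j
    using that
  proof (induction i)
    case 0 then show ?case by simp
  next
    case (Suc i)
    then show ?case using XSsub[of i] by (auto simp: le_Suc_eq)
  qed
  have amono: "strict_mono a"
    unfolding strict_mono_Suc_iff using XSsub ain by blast
  define N where "N = range a"
  have NM: "N \<subseteq> M" unfolding N_def using ain Xdec[of 0] X0 by auto
  have Ninf: "infinite N" unfolding N_def using amono strict_mono_imp_inj_on range_inj_infinite by blast
  have "N \<in> inf_subsets M" using NM Ninf unfolding inf_subsets_def by simp
  moreover have "\<forall>T\<in>inf_subsets N. \<forall>c\<in>N. (\<forall>t\<in>T. c < t) \<longrightarrow> R c T"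
  proof (intro ballI impI)
    fix T c assume T: "T \<in> inf_subsets N" and c: "c \<in> N" and ct: "\<forall>t\<in>T. c < t"
    obtain j where cj: "c = a j" using c unfolding N_def by blast
    have "T \<subseteq> X (Suc j)"
    proof
      fix t assume "t \<in> T"
      then obtain i where ti: "t = a i" "a j < a i" using T ct cj unfolding inf_subsets_def N_def by blast
      then have "j < i" using amono strict_mono_less by blast
      then show "t \<in> X (Suc j)" using ain[of i] Xdec[of "Suc j" i] ti by auto
    qed
    then have "T \<in> inf_subsets (X (Suc j))" using T unfolding inf_subsets_def by auto
    then show "R c T" using XR cj by blast
  qed
  ultimately show ?thesis by blast
qed

lemma fin_inter:
  fixes R :: "nat \<Rightarrow> nat set \<Rightarrow> bool" and c :: nat
  assumes H: "\<And>p M. M \<in> inf_subsets posnat \<Longrightarrow> \<exists>N\<in>inf_subsets M. \<forall>T\<in>inf_subsets N. R p T"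
  shows "M \<in> inf_subsets posnat \<Longrightarrow> \<exists>N\<in>inf_subsets M. \<forall>T\<in>inf_subsets N. \<forall>p\<le>c. R p T"
proof (induction c arbitrary: M)
  case 0
  then show ?case using H[of M 0] by auto
next
  case (Suc c)
  obtain N1 where N1: "N1 \<in> inf_subsets M" "\<forall>T\<in>inf_subsets N1. \<forall>p\<le>c. R p T" using Suc by blast
  have "N1 \<in> inf_subsets posnat" using N1 Suc.prems inf_sub_trans by blast
  then obtain N2 where N2: "N2 \<in> inf_subsets N1" "\<forall>T\<in>inf_subsets N2. R (Suc c) T" using H by blast
  have "\<forall>T\<in>inf_subsets N2. \<forall>p\<le>Suc c. R p T"
    using N1 N2 inf_sub_trans by (metis le_Suc_eq)
  then show ?case using N1 N2 inf_sub_trans by blast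
qed



definition claim :: "('o::wellorder \<Rightarrow> nat \<Rightarrow> 'o) \<Rightarrow> 'o \<Rightarrow> bool" where
  "claim beta x = (\<forall>z<x. \<forall>e>0. \<forall>M\<in>inf_subsets posnat. \<exists>N\<in>inf_subsets M. \<forall>T\<in>inf_subsets N.
      \<forall>F\<in>schreier beta z. (\<Sum>j\<in>F. ravg beta x T 1 j) \<le> e)"

definition cnd :: "('o::wellorder \<Rightarrow> nat \<Rightarrow> 'o) \<Rightarrow> 'o \<Rightarrow> 'o \<Rightarrow> nat \<Rightarrow> nat set \<Rightarrow> real \<Rightarrow> bool" where
  "cnd beta eta z c T d = (\<forall>F\<in>schreier beta z. (\<exists>f\<in>F. f \<le> c) \<longrightarrow> (\<Sum>j\<in>F. ravg beta eta T 1 j) \<le> d)"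

lemma sum_Union_le:
  fixes h :: "nat \<Rightarrow> real"
  assumes "finite S" "\<forall>G\<in>S. finite G" "\<forall>j. 0 \<le> h j"
  shows "sum h (\<Union>S) \<le> (\<Sum>G\<in>S. sum h G)"
  using assms
proof (induction S rule: finite_induct)
  case empty then show ?case by simp
next
  case (insert G S)
  have fin: "finite G" "finite (\<Union>S)" using insert by auto
  have "sum h (\<Union>(insert G S)) = sum h (G \<union> \<Union>S)" by simp
  also have "\<dots> = sum h G + sum h (\<Union>S) - sum h (G \<inter> \<Union>S)" using sum_Un[OF fin] by simp
  also have "\<dots> \<le> sum h G + sum h (\<Union>S)" using insert.prems by (simp add: sum_nonneg)
  also have "\<dots> \<le> sum h G + (\<Sum>G\<in>S. sum h G)" using insert by simp
  also have "\<dots> = (\<Sum>G\<in>insert G S. sum h G)" using insert by simp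
  finally show ?case .
qed

lemma lemU:
  assumes f: "fund_seq beta" and cl: "claim beta eta" and z: "z \<le> eta" and d: "0 < d"
    and M: "M \<in> inf_subsets posnat"
  shows "\<exists>N\<in>inf_subsets M. \<forall>T\<in>inf_subsets N. cnd beta eta z c T d"
proof (cases "z < eta")
  case True
  then show ?thesis using cl d M unfolding claim_def cnd_def by blast
next
  case False
  then have ze: "z = eta" using z by simp
  show ?thesis
  proof (cases eta rule: cases3)
    case 1
    let ?N = "{m\<in>M. c < m}"
    have N: "?N \<in> inf_subsets M" using tail_in[OF M] .
    have "cnd beta eta z c T d" if T: "T \<in> inf_subsets ?N" for T
    proof -
      have TP: "T \<in> inf_subsets posnat" using T N M inf_sub_trans by blast
      have e: "enumerate T 0 = minset T" by (simp only: minset_def enumerate.simps)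
      have "minset T \<in> T" using minset_in[OF TP] by blast
      then have cm: "c < minset T" using T unfolding inf_subsets_def by auto
      show ?thesis unfolding cnd_def
      proof (intro ballI impI)
        fix F assume F: "F \<in> schreier beta z" and ex: "\<exists>f\<in>F. f \<le> c"
        then obtain n where "F = {n}" using ze 1 by (subst (asm) schreier_eq[OF f]) (auto simp: schreier_step_def)
        then show "(\<Sum>j\<in>F. ravg beta eta T 1 j) \<le> d" using ex cm d 1
          by (auto simp: ravg_zero e unitvec_def)
      qed
    qed
    then show ?thesis using N by blast
  next
    case 2
    let ?g = "opred eta"
    have gl: "?g < eta" using opred[OF 2] by simp
    have nz: "eta \<noteq> ozero" using 2 ozero_le unfolding is_succ_def by (metis leD)
    have d': "0 < d / (real c + 1)" using d by simp
    obtain N where N: "N \<in> inf_subsets M"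
      "\<forall>T\<in>inf_subsets N. \<forall>F\<in>schreier beta ?g. (\<Sum>j\<in>F. ravg beta eta T 1 j) \<le> d / (real c + 1)"
      using cl gl d' M unfolding claim_def by blast
    have "cnd beta eta z c T d" if T: "T \<in> inf_subsets N" for T
      unfolding cnd_def
    proof (intro ballI impI)
      fix F assume F: "F \<in> schreier beta z" and ex: "\<exists>f\<in>F. f \<le> c"
      then obtain f where ff: "f \<in> F" "f \<le> c" by blast
      have TP: "T \<in> inf_subsets posnat" using T N M inf_sub_trans by blast
      have nn: "\<forall>j. 0 \<le> ravg beta eta T 1 j" using prob_all[OF f] TP unfolding prob_def by blast
      from F ff obtain Fs where Fs: "F = \<Union>(set Fs)" "Fs \<noteq> []" "length Fs \<le> Min (hd Fs)"
        "sorted_wrt (\<lambda>F G. Max F < Min G) Fs" "\<forall>G\<in>set Fs. G \<in> schreier beta ?g \<and> G \<noteq> {}"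
        using ze 2 nz by (subst (asm) schreier_eq[OF f]) (auto simp: schreier_step_def)
      have finG: "\<forall>G\<in>set Fs. finite G" using Fs(5) schreier_finite[OF f] by blast
      obtain G where G: "G \<in> set Fs" "f \<in> G" using Fs(1) ff by blast
      obtain H rest where Hr: "Fs = H # rest" using Fs(2) by (cases Fs) auto
      have "Min H \<le> f"
      proof (cases "G = H")
        case True then show ?thesis using G finG Hr by simp
      next
        case False
        then have "G \<in> set rest" using G Hr by simp
        then have "Max H < Min G" using Fs(4) Hr by simp
        moreover have "Min H \<le> Max H" using finG Fs(5) Hr by simp
        moreover have "Min G \<le> f" using G finG by simp
        ultimately show ?thesis by simp
      qed
      then have len: "length Fs \<le> c" using Fs(3) Hr ff by simp
      have "(\<Sum>j\<in>F. ravg beta eta T 1 j) \<le> (\<Sum>G\<in>set Fs. \<Sum>j\<in>G. ravg beta eta T 1 j)"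
        unfolding Fs(1) by (rule sum_Union_le) (use finG nn in auto)
      also have "\<dots> \<le> real (card (set Fs)) * (d / (real c + 1))"
        by (rule sum_bounded_above) (use N T Fs(5) in auto)
      also have "\<dots> \<le> real c * (d / (real c + 1))"
        by (rule mult_right_mono) (use card_length[of Fs] len d in auto)
      also have "\<dots> \<le> d" using d by (simp add: field_simps)
      finally show "(\<Sum>j\<in>F. ravg beta eta T 1 j) \<le> d" .
    qed
    then show ?thesis using N by blast
  next
    case 3
    have nz: "eta \<noteq> ozero" "\<not> is_succ eta" using 3 unfolding is_limit_def by auto
    have H: "\<exists>N\<in>inf_subsets M'. \<forall>T\<in>inf_subsets N. (1 \<le> p \<longrightarrow>
        (\<forall>F\<in>schreier beta (osucc (beta eta p)). (\<Sum>j\<in>F. ravg beta eta T 1 j) \<le> d))"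
      if "M' \<in> inf_subsets posnat" for p M'
    proof (cases "1 \<le> p")
      case True
      then show ?thesis using cl fund_lt[OF f 3 True] d that unfolding claim_def by blast
    next
      case False
      have "M' \<in> inf_subsets M'" using that unfolding inf_subsets_def by auto
      then show ?thesis using False by blast
    qed
    define R where "R p T = (1 \<le> p \<longrightarrow>
        (\<forall>F\<in>schreier beta (osucc (beta eta p)). (\<Sum>j\<in>F. ravg beta eta T 1 j) \<le> d))" for p T
    have H': "\<exists>N\<in>inf_subsets M'. \<forall>T\<in>inf_subsets N. R p T" if "M' \<in> inf_subsets posnat" for p M'
      unfolding R_def by (rule H[OF that])
    obtain N where N: "N \<in> inf_subsets M" "\<forall>T\<in>inf_subsets N. \<forall>p\<le>c. R p T"
      using fin_inter[of R, OF H' M] by blast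
    have "cnd beta eta z c T d" if T: "T \<in> inf_subsets N" for T
      unfolding cnd_def
    proof (intro ballI impI)
      fix F assume F: "F \<in> schreier beta z" and ex: "\<exists>f\<in>F. f \<le> c"
      then obtain f where ff: "f \<in> F" "f \<le> c" by blast
      have finF: "finite F" using schreier_finite[OF f F] .
      from F ff obtain n where n: "1 \<le> n" "n \<le> Min F" "F \<in> schreier beta (osucc (beta eta n))"
        using ze nz by (subst (asm) schreier_eq[OF f]) (auto simp: schreier_step_def)
      have "Min F \<le> f" using finF ff by simp
      then have "n \<le> c" using n ff by simp
      then have "R n T" using N T by blast
      then show "(\<Sum>j\<in>F. ravg beta eta T 1 j) \<le> d" using n unfolding R_def by blast
    qed
    then show ?thesis using N by blast
  qed
qed



lemma lim_mono: assumes f: "fund_seq beta" and l: "is_limit x" and a: "1 \<le> a" and ab: "a < b"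
  shows "osucc (beta x a) < osucc (beta x b)"
proof -
  have st: "\<forall>n\<ge>1. osucc (beta x n) < osucc (beta x (Suc n))" using f l unfolding fund_seq_def by blast
  have "(\<lambda>n. osucc (beta x (n + a))) 0 < (\<lambda>n. osucc (beta x (n + a))) (b - a)"
  proof (rule lift_Suc_mono_less[of "\<lambda>n. osucc (beta x (n + a))"])
    show "osucc (beta x (n + a)) < osucc (beta x (Suc n + a))" for n using st a by simp
    show "0 < b - a" using ab by simp
  qed
  then show ?thesis using ab by simp
qed

lemma lim_mono_le: "fund_seq beta \<Longrightarrow> is_limit x \<Longrightarrow> 1 \<le> a \<Longrightarrow> a \<le> b \<Longrightarrow>
   osucc (beta x a) \<le> osucc (beta x b)"
  using lim_mono[of beta x a b] by (cases "a = b") auto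

lemma bad_bound: assumes f: "fund_seq beta" and l: "is_limit x"
  shows "\<exists>a1. \<forall>a\<ge>a1. beta x a < osucc (beta x a)"
proof (cases "\<exists>b\<ge>1. \<not> beta x b < osucc (beta x b)")
  case False
  then show ?thesis by (metis le_trans nat_le_linear not_one_le_zero le_refl)
next
  case True
  then obtain b where b: "1 \<le> b" "\<not> beta x b < osucc (beta x b)" by blast
  have top: "\<forall>y. \<not> beta x b < y" using b osucc_gt by blast
  have "beta x a < osucc (beta x a)" if "Suc b \<le> a" for a
  proof (rule ccontr)
    assume na: "\<not> beta x a < osucc (beta x a)"
    have topa: "\<forall>y. \<not> beta x a < y" using na osucc_gt by blast
    have "beta x a = beta x b" using top topa by (meson linorder_neqE)
    moreover have "osucc (beta x b) < osucc (beta x a)" using lim_mono[OF f l b(1)] that by simp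
    ultimately show False by simp
  qed
  then show ?thesis by blast
qed

lemma fund_cof: "fund_seq beta \<Longrightarrow> is_limit x \<Longrightarrow> g < x \<Longrightarrow> \<exists>n\<ge>1. g < osucc (beta x n)"
  unfolding fund_seq_def by blast

lemma finish:
  assumes f: "fund_seq beta" and p: "prob beta eta" and L: "L \<in> inf_subsets posnat"
    and e: "0 < e" and b: "nat \<lceil>2 / e\<rceil> < minset L"
    and H: "\<forall>c\<in>L. \<forall>T\<in>inf_subsets L. (\<forall>t\<in>T. c < t) \<longrightarrow> cnd beta eta z c T (e / 2)"
    and F: "F \<in> schreier beta z"
  shows "(\<Sum>j\<in>F. (1 / real (minset L)) * (\<Sum>i = 1..minset L. ravg beta eta L i j)) \<le> e"
proof -
  let ?k = "minset L"
  have cond: "\<forall>i. 2 \<le> i \<longrightarrow> i \<le> ?k \<longrightarrow> (\<forall>F\<in>schreier beta z.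
        (\<exists>f\<in>F. f \<le> Max (msupp (ravg beta eta L (i - 1)))) \<longrightarrow> (\<Sum>j\<in>F. ravg beta eta L i j) \<le> e / 2)"
  proof (intro allI impI ballI)
    fix i G assume i: "2 \<le> i" "i \<le> ?k" and G: "G \<in> schreier beta z"
      and ex: "\<exists>f\<in>G. f \<le> Max (msupp (ravg beta eta L (i - 1)))"
    let ?c = "Max (msupp (ravg beta eta L (i - 1)))"
    obtain T where T: "T \<in> inf_subsets L" "ravg beta eta L i = ravg beta eta T 1" "\<forall>t\<in>T. ?c < t"
      using seq[OF f L, of i eta] i by auto
    have "finite (msupp (ravg beta eta L (i - 1)))" "msupp (ravg beta eta L (i - 1)) \<noteq> {}"
      "msupp (ravg beta eta L (i - 1)) \<subseteq> L"
      using prob_seq[OF f p L, of "i - 1"] i by auto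
    then have cL: "?c \<in> L" using Max_in by blast
    have "cnd beta eta z ?c T (e / 2)" using H cL T by blast
    then show "(\<Sum>j\<in>G. ravg beta eta L i j) \<le> e / 2" using G ex T(2) unfolding cnd_def by simp
  qed
  have "(\<Sum>j\<in>F. (1 / real ?k) * (\<Sum>i = 1..?k. ravg beta eta L i j)) \<le> 1 / real ?k + e / 2"
    by (rule avg_bound[OF f p L _ cond F]) (use e in simp)
  also have "1 / real ?k \<le> e / 2"
  proof -
    have "2 / e \<le> real (nat \<lceil>2 / e\<rceil>)" by linarith
    also have "\<dots> \<le> real ?k" by (meson b less_imp_le of_nat_le_iff)
    finally have "2 / e \<le> real ?k" .
    then have "2 \<le> e * real ?k" using e by (simp add: field_simps)
    moreover have "0 < real ?k" using b by simp
    ultimately show ?thesis using e by (simp add: field_simps)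
  qed
  finally show ?thesis by simp
qed

lemma claim_all: assumes f: "fund_seq beta" shows "claim beta x"
proof (induction x rule: less_induct)
  case (less x)
  show ?case unfolding claim_def
  proof (intro allI impI ballI)
    fix z and e :: real and M assume z: "z < x" and e: "0 < e" and M: "M \<in> inf_subsets posnat"
    define b where "b = nat \<lceil>2 / e\<rceil>"
    have d: "0 < e / 2" using e by simp
    show "\<exists>N\<in>inf_subsets M. \<forall>T\<in>inf_subsets N. \<forall>F\<in>schreier beta z. (\<Sum>j\<in>F. ravg beta x T 1 j) \<le> e"
    proof (cases x rule: cases3)
      case 1
      then show ?thesis using z ozero_le by (metis leD)
    next
      case 2
      let ?eta = "opred x"
      have el: "?eta < x" using opred[OF 2] by simp
      have zle: "z \<le> ?eta" using lt_osucc_le[of z ?eta] opred[OF 2] z by simp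
      have cl: "claim beta ?eta" using less.IH[OF el] .
      let ?M' = "{m\<in>M. b < m}"
      have M'1: "?M' \<in> inf_subsets M" using tail_in[OF M] .
      have M'2: "?M' \<in> inf_subsets posnat" using M'1 M inf_sub_trans by blast
      have H: "\<exists>N\<in>inf_subsets M''. \<forall>T\<in>inf_subsets N. cnd beta ?eta z c T (e / 2)"
        if "M'' \<in> inf_subsets posnat" for c M''
        using lemU[OF f cl zle d that] .
      obtain N where N: "N \<in> inf_subsets ?M'"
        "\<forall>T\<in>inf_subsets N. \<forall>c\<in>N. (\<forall>t\<in>T. c < t) \<longrightarrow> cnd beta ?eta z c T (e / 2)"
        using diag[of "\<lambda>c T. cnd beta ?eta z c T (e / 2)", OF H M'2] by auto
      have "\<forall>F\<in>schreier beta z. (\<Sum>j\<in>F. ravg beta x L 1 j) \<le> e" if L: "L \<in> inf_subsets N" for L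
      proof
        fix F assume F: "F \<in> schreier beta z"
        have LP: "L \<in> inf_subsets posnat" by (rule inf_sub_trans[OF M'2 inf_sub_trans[OF N(1) L]])
        have bk: "b < minset L" using minset_in[OF LP] L N unfolding inf_subsets_def by auto
        have Hc: "\<forall>c\<in>L. \<forall>T\<in>inf_subsets L. (\<forall>t\<in>T. c < t) \<longrightarrow> cnd beta ?eta z c T (e / 2)"
        proof (intro ballI impI)
          fix c T assume c: "c \<in> L" and T: "T \<in> inf_subsets L" and ct: "\<forall>t\<in>T. c < t"
          have TN: "T \<in> inf_subsets N" by (rule inf_sub_trans[OF L T])
          have "c \<in> N" using L c unfolding inf_subsets_def by blast
          then show "cnd beta ?eta z c T (e / 2)" using N(2) TN ct by blast
        qed
        show "(\<Sum>j\<in>F. ravg beta x L 1 j) \<le> e"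
          using finish[OF f prob_all[OF f] LP e bk[unfolded b_def] Hc F] A_succ[OF 2] by simp
      qed
      moreover have "N \<in> inf_subsets M" by (rule inf_sub_trans[OF M'1 N(1)])
      ultimately show ?thesis by blast
    next
      case 3
      obtain a0 where a0: "1 \<le> a0" "z < osucc (beta x a0)" using fund_cof[OF f 3 z] by blast
      obtain a2 where a2: "\<forall>a\<ge>a2. beta x a < osucc (beta x a)" using bad_bound[OF f 3] by blast
      define a1 where "a1 = max a0 a2"
      have good: "beta x a < x \<and> claim beta (beta x a) \<and> z \<le> beta x a \<and>
          is_succ (osucc (beta x a)) \<and> opred (osucc (beta x a)) = beta x a" if "a1 \<le> a" for a
      proof -
        have s: "beta x a < osucc (beta x a)" using a2 that unfolding a1_def by simp
        have a1': "1 \<le> a" using a0 that unfolding a1_def by simp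
        have lt: "beta x a < x" using s fund_lt[OF f 3 a1'] by simp
        have "z < osucc (beta x a)" using a0 lim_mono_le[OF f 3 a0(1), of a] that unfolding a1_def by simp
        then have "z \<le> beta x a" by (rule lt_osucc_le)
        then show ?thesis using lt less.IH[OF lt] succ_is_succ[OF s] by blast
      qed
      let ?M' = "{m\<in>M. max a1 b < m}"
      have M'1: "?M' \<in> inf_subsets M" using tail_in[OF M] .
      have M'2: "?M' \<in> inf_subsets posnat" using M'1 M inf_sub_trans by blast
      define R where "R c T = (\<forall>a\<le>c. a1 \<le> a \<longrightarrow> cnd beta (beta x a) z c T (e / 2))" for c T
      have H: "\<exists>N\<in>inf_subsets M''. \<forall>T\<in>inf_subsets N. R c T"
        if M'': "M'' \<in> inf_subsets posnat" for c M''
      proof -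
        have H': "\<exists>N\<in>inf_subsets M3. \<forall>T\<in>inf_subsets N. (\<lambda>a T. a1 \<le> a \<longrightarrow> cnd beta (beta x a) z c T (e / 2)) a T"
          if "M3 \<in> inf_subsets posnat" for a M3
        proof (cases "a1 \<le> a")
          case True
          then show ?thesis using lemU[OF f _ _ d that, of "beta x a" z c] good[OF True] by simp
        next
          case False
          have "M3 \<in> inf_subsets M3" using that unfolding inf_subsets_def by auto
          then show ?thesis using False by blast
        qed
        show ?thesis using fin_inter[OF H' M'', of c] unfolding R_def by simp
      qed
      obtain N where N: "N \<in> inf_subsets ?M'"
        "\<forall>T\<in>inf_subsets N. \<forall>c\<in>N. (\<forall>t\<in>T. c < t) \<longrightarrow> R c T"
        using diag[of R, OF H M'2] by auto
      have "\<forall>F\<in>schreier beta z. (\<Sum>j\<in>F. ravg beta x L 1 j) \<le> e" if L: "L \<in> inf_subsets N" for L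
      proof
        fix F assume F: "F \<in> schreier beta z"
        let ?a = "minset L"
        have LP: "L \<in> inf_subsets posnat" by (rule inf_sub_trans[OF M'2 inf_sub_trans[OF N(1) L]])
        have ak: "max a1 b < ?a" using minset_in[OF LP] L N unfolding inf_subsets_def by auto
        have g: "beta x ?a < x \<and> claim beta (beta x ?a) \<and> z \<le> beta x ?a \<and>
          is_succ (osucc (beta x ?a)) \<and> opred (osucc (beta x ?a)) = beta x ?a" using good ak by simp
        have Hc: "\<forall>c\<in>L. \<forall>T\<in>inf_subsets L. (\<forall>t\<in>T. c < t) \<longrightarrow> cnd beta (beta x ?a) z c T (e / 2)"
        proof (intro ballI impI)
          fix c T assume c: "c \<in> L" and T: "T \<in> inf_subsets L" and ct: "\<forall>t\<in>T. c < t"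
          have TN: "T \<in> inf_subsets N" by (rule inf_sub_trans[OF L T])
          have "c \<in> N" using L c unfolding inf_subsets_def by blast
          then have "R c T" using N(2) TN ct by blast
          moreover have "?a \<le> c" using minset_in[OF LP] c by blast
          ultimately show "cnd beta (beta x ?a) z c T (e / 2)" using ak unfolding R_def by simp
        qed
        have bk: "b < ?a" using ak by simp
        have "ravg beta x L 1 = ravg beta (osucc (beta x ?a)) L 1" using A_lim[OF f 3 LP] .
        also have "\<dots> = (\<lambda>j. (1 / real ?a) * (\<Sum>i = 1..?a. ravg beta (beta x ?a) L i j))"
          using A_succ[of "osucc (beta x ?a)" beta L] g by simp
        finally show "(\<Sum>j\<in>F. ravg beta x L 1 j) \<le> e"
          using finish[OF f prob_all[OF f] LP e bk[unfolded b_def] Hc F] by simp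
      qed
      moreover have "N \<in> inf_subsets M" by (rule inf_sub_trans[OF M'1 N(1)])
      ultimately show ?thesis by blast
    qed
  qed
qed

theorem proposition2p15:
  fixes beta :: "'o::wellorder \<Rightarrow> nat \<Rightarrow> 'o" and M :: "nat set" and eps :: real
    and z x :: 'o
  assumes "\<forall>y::'o. countable {w. w < y}"
    and "fund_seq beta"
    and "M \<in> inf_subsets posnat"
    and "eps > 0"
    and "z < x"
  shows "\<exists>N \<in> inf_subsets M. \<forall>L \<in> inf_subsets N. \<forall>n \<ge> 1.
           schreier_norm beta z (ravg beta x L n) < eps"
proof -
  note f = assms(2)
  have e2: "0 < eps / 2" using assms(4) by simp
  obtain N where N: "N \<in> inf_subsets M"
    "\<forall>T\<in>inf_subsets N. \<forall>F\<in>schreier beta z. (\<Sum>j\<in>F. ravg beta x T 1 j) \<le> eps / 2"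
    using claim_all[OF f, of x] assms(5) e2 assms(3) unfolding claim_def by blast
  have "schreier_norm beta z (ravg beta x L n) < eps" if L: "L \<in> inf_subsets N" and n: "1 \<le> n" for L n
  proof -
    have LP: "L \<in> inf_subsets posnat" using L N assms(3) inf_sub_trans by blast
    obtain T where T: "T \<in> inf_subsets L" "ravg beta x L n = ravg beta x T 1" using seq[OF f LP n] by blast
    have TP: "T \<in> inf_subsets posnat" using T LP inf_sub_trans by blast
    have TN: "T \<in> inf_subsets N" using T L inf_sub_trans by blast
    have nn: "\<forall>j. 0 \<le> ravg beta x T 1 j" using prob_all[OF f] TP unfolding prob_def by blast
    have "schreier_norm beta z (ravg beta x L n) = (SUP F \<in> schreier beta z. \<Sum>i\<in>F. ravg beta x T 1 i)"
      unfolding schreier_norm_def T(2) using nn by simp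
    also have "\<dots> \<le> eps / 2"
      by (rule cSUP_least) (use schreier_empty[OF f] N TN in auto)
    also have "\<dots> < eps" using assms(4) by simp
    finally show ?thesis .
  qed
  then show ?thesis using N by blast
qed

end
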